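(* Let $\theta_0\in\mathbb{R}$ and let $\hat\theta_u,\hat\theta_b$ be real random variables with finite second moments such that $\mathbb{E}[\hat\theta_u]=\theta_0$ and $\mathbb{E}[\hat\theta_b]=\theta_0+\mu$ for some (arbitrary) $\mu\in\mathbb{R}$. Write $\sigma^2_u=\mathrm{Var}(\hat\theta_u)$, $\sigma^2_b=\mathrm{Var}(\hat\theta_b)$, $\sigma_{bu}=\mathrm{Cov}(\hat\theta_b,\hat\theta_u)$, and assume $\sigma^2_u>0$ and $\sigma^2_u+\sigma^2_b-2\sigma_{bu}>0$. Let $\hat\sigma^2_u,\hat\sigma^2_b,\hat\sigma_{bu}$ be real random variables (on the same probability space) with bounded second moments and satisfying $\hat\sigma^2_u+\hat\sigma^2_b-2\hat\sigma_{bu}>0$ almost surely. Define $$\hat\lambda=\frac{\hat\sigma^2_u-\hat\sigma_{bu}}{(\hat\theta_u-\hat\theta_b)^2+\hat\sigma^2_u+\hat\sigma^2_b-2\hat\sigma_{bu}},\qquad \hat\theta_{\hat\lambda}=\hat\lambda\hat\theta_b+(1-\hat\lambda)\hat\theta_u.$$ Then $$\mathbb{E}\big[(\hat\theta_{\hat\lambda}-\theta_0)^2\big]\le\left(\sigma_u+\frac12\sqrt{\mathbb{E}[S^2]}\right)^2,\qquad\text{where } \mathbb{E}[S^2]=\mathbb{E}\!\left[\frac{(\hat\sigma^2_u-\hat\sigma_{bu})^2}{\hat\sigma^2_u+\hat\sigma^2_b-2\hat\sigma_{bu}}\right].$$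
   Context: $\hat\theta_u$ is an unbiased estimator of $\theta_0$, $\hat\theta_b$ a possibly biased estimator with unknown bias $\mu$, and $\hat\sigma^2_u,\hat\sigma^2_b,\hat\sigma_{bu}$ are estimators of $\mathrm{Var}(\hat\theta_u),\mathrm{Var}(\hat\theta_b),\mathrm{Cov}(\hat\theta_b,\hat\theta_u)$. $\sigma_u=\sqrt{\sigma^2_u}$. *)

theory Defs
  imports "HOL-Probability.Probability"
begin

definition lambda_hat :: "real \<Rightarrow> real \<Rightarrow> real \<Rightarrow> real \<Rightarrow> real \<Rightarrow> real" where
  "lambda_hat tu tb su2 sb2 sbu = (su2 - sbu) / ((tu - tb)^2 + su2 + sb2 - 2 * sbu)"

definition theta_lambda :: "real \<Rightarrow> real \<Rightarrow> real \<Rightarrow> real \<Rightarrow> real \<Rightarrow> real" where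
  "theta_lambda tu tb su2 sb2 sbu =
     (let l = lambda_hat tu tb su2 sb2 sbu in l * tb + (1 - l) * tu)"

end

theory Submission
  imports Defs
begin

lemma pw_bound:
  fixes tu tb su2 sb2 sbu th t :: real
  assumes d: "su2 + sb2 - 2 * sbu > 0" and t: "t > 0"
  shows "(theta_lambda tu tb su2 sb2 sbu - th)^2
     \<le> (1+t) * (tu - th)^2 + ((1 + 1/t)/4) * ((su2 - sbu)^2 / (su2 + sb2 - 2 * sbu))"
proof -
  define d where "d = su2 + sb2 - 2 * sbu"
  define a where "a = su2 - sbu"
  define D where "D = tu - tb"
  define l where "l = a / (D^2 + d)"
  define x where "x = tu - th"
  define y where "y = l * D"
  have dpos: "d > 0" using d d_def by simp
  have den: "D^2 + d > 0" using dpos by (simp add: add_nonneg_pos)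
  have eq: "theta_lambda tu tb su2 sb2 sbu - th = x - y"
  proof -
    have "lambda_hat tu tb su2 sb2 sbu = l" unfolding lambda_hat_def l_def a_def D_def d_def
      by (simp add: algebra_simps)
    thus ?thesis unfolding theta_lambda_def Let_def x_def y_def D_def by (simp add: algebra_simps)
  qed
  have y2: "y^2 \<le> a^2 / (4*d)"
  proof -
    have "y^2 = a^2 * D^2 / (D^2+d)^2" unfolding y_def l_def by (simp add: power_divide power_mult_distrib)
    also have "\<dots> \<le> a^2 / (4*d)"
    proof -
      have k: "4*d*D^2 \<le> (D^2+d)^2" 
      proof -
        have "0 \<le> (D^2 - d)^2" by simp
        thus ?thesis by (simp add: power2_eq_square algebra_simps)
      qed
      have "a^2 * D^2 * (4*d) \<le> a^2 * (D^2+d)^2"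
        using mult_left_mono[OF k, of "a^2"] by (simp add: algebra_simps)
      thus ?thesis using den dpos by (simp add: divide_simps)
    qed
    finally show ?thesis .
  qed
  have key: "(x - y)^2 \<le> (1+t) * x^2 + (1+1/t) * y^2"
  proof -
    have "0 \<le> (t*x + y)^2" by simp
    hence "-2*t*x*y \<le> t^2*x^2 + y^2" by (simp add: power2_eq_square algebra_simps)
    hence "-2*x*y \<le> t*x^2 + y^2/t" using t
      by (simp add: divide_simps power2_eq_square algebra_simps)
    thus ?thesis by (simp add: power2_eq_square algebra_simps)
  qed
  have "(1+1/t) * y^2 \<le> (1+1/t) * (a^2/(4*d))"
    using y2 t by (intro mult_left_mono) (auto intro: add_nonneg_nonneg)
  also have "\<dots> = ((1 + 1/t)/4) * (a^2/d)" by simp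
  finally have "(1+1/t) * y^2 \<le> ((1 + 1/t)/4) * (a^2/d)" .
  hence fin: "(x-y)^2 \<le> (1+t)*x^2 + ((1+1/t)/4)*(a^2/d)" using key by linarith
  show ?thesis using fin by (simp only: eq x_def a_def d_def)
qed
theorem theorem3:
  fixes M :: "'a measure" and \<theta>0 \<mu> :: real
    and tu tb su2 sb2 sbu :: "'a \<Rightarrow> real"
  assumes "prob_space M"
    and "tu \<in> borel_measurable M" and "tb \<in> borel_measurable M"
    and "integrable M (\<lambda>x. (tu x)^2)" and "integrable M (\<lambda>x. (tb x)^2)"
    and "prob_space.expectation M tu = \<theta>0"
    and "prob_space.expectation M tb = \<theta>0 + \<mu>"
    and "prob_space.variance M tu > 0"
    and "prob_space.variance M tu + prob_space.variance M tb
           - 2 * prob_space.expectation M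
               (\<lambda>x. (tb x - prob_space.expectation M tb) * (tu x - prob_space.expectation M tu)) > 0"
    and "su2 \<in> borel_measurable M" and "sb2 \<in> borel_measurable M" and "sbu \<in> borel_measurable M"
    and "integrable M (\<lambda>x. (su2 x)^2)" and "integrable M (\<lambda>x. (sb2 x)^2)"
    and "integrable M (\<lambda>x. (sbu x)^2)"
    and "AE x in M. su2 x + sb2 x - 2 * sbu x > 0"
  shows "(\<integral>\<^sup>+ x. ennreal ((su2 x - sbu x)^2 / (su2 x + sb2 x - 2 * sbu x)) \<partial>M) < \<infinity> \<longrightarrow>
         (\<integral>\<^sup>+ x. ennreal ((theta_lambda (tu x) (tb x) (su2 x) (sb2 x) (sbu x) - \<theta>0)^2) \<partial>M)
           \<le> ennreal ((sqrt (prob_space.variance M tu)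
               + sqrt (enn2real (\<integral>\<^sup>+ x. ennreal ((su2 x - sbu x)^2 / (su2 x + sb2 x - 2 * sbu x)) \<partial>M)) / 2)^2)"
proof
  interpret prob_space M by fact
  note [measurable] = assms(2,3,10,11,12)
  define S where "S = (\<lambda>x. (su2 x - sbu x)^2 / (su2 x + sb2 x - 2 * sbu x))"
  define N where "N = (\<integral>\<^sup>+ x. ennreal (S x) \<partial>M)"
  define A where "A = variance tu"
  define L where "L = (\<integral>\<^sup>+ x. ennreal ((theta_lambda (tu x) (tb x) (su2 x) (sb2 x) (sbu x) - \<theta>0)^2) \<partial>M)"
  assume fin: "(\<integral>\<^sup>+ x. ennreal ((su2 x - sbu x)^2 / (su2 x + sb2 x - 2 * sbu x)) \<partial>M) < \<infinity>"
  hence Nfin: "N < \<infinity>" unfolding N_def S_def .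
  define n where "n = enn2real N"
  have Neq: "N = ennreal n" using Nfin unfolding n_def by (simp add: less_top)
  have n0: "n \<ge> 0" unfolding n_def by simp
  have A0: "A > 0" using assms(8) A_def by simp
  have inttu: "integrable M tu" by (rule square_integrable_imp_integrable[OF assms(2,4)])
  have inte: "integrable M (\<lambda>x. (tu x - \<theta>0)^2)"
  proof -
    have "integrable M (\<lambda>x. (tu x)^2 - 2 * \<theta>0 * tu x + \<theta>0^2)"
      using assms(4) inttu by auto
    moreover have "(\<lambda>x. (tu x)^2 - 2 * \<theta>0 * tu x + \<theta>0^2) = (\<lambda>x. (tu x - \<theta>0)^2)"
      by (simp add: fun_eq_iff power2_diff)
    ultimately show ?thesis by simp
  qed
  have Aeq: "(\<integral>\<^sup>+ x. ennreal ((tu x - \<theta>0)^2) \<partial>M) = ennreal A"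
    unfolding A_def using assms(6) inte by (subst nn_integral_eq_integral) auto
  have meas_th: "(\<lambda>x. theta_lambda (tu x) (tb x) (su2 x) (sb2 x) (sbu x)) \<in> borel_measurable M"
    unfolding theta_lambda_def lambda_hat_def Let_def by measurable
  have bound: "L \<le> ennreal ((1+t)*A + ((1+1/t)/4) * n)" if t: "t > 0" for t
  proof -
    have "L \<le> (\<integral>\<^sup>+ x. ennreal (1+t) * ennreal ((tu x - \<theta>0)^2) + ennreal ((1+1/t)/4) * ennreal (S x) \<partial>M)"
      unfolding L_def
    proof (rule nn_integral_mono_AE)
      show "AE x in M. ennreal ((theta_lambda (tu x) (tb x) (su2 x) (sb2 x) (sbu x) - \<theta>0)^2)
         \<le> ennreal (1+t) * ennreal ((tu x - \<theta>0)^2) + ennreal ((1+1/t)/4) * ennreal (S x)"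
        using assms(16)
      proof eventually_elim
        case (elim x)
        have S0: "S x \<ge> 0" unfolding S_def using elim by simp
        have "ennreal ((theta_lambda (tu x) (tb x) (su2 x) (sb2 x) (sbu x) - \<theta>0)^2)
          \<le> ennreal ((1+t) * (tu x - \<theta>0)^2 + ((1 + 1/t)/4) * S x)"
          using pw_bound[OF elim t, of "tu x" "tb x" \<theta>0] unfolding S_def by (rule ennreal_leI)
        also have "\<dots> = ennreal (1+t) * ennreal ((tu x - \<theta>0)^2) + ennreal ((1+1/t)/4) * ennreal (S x)"
        proof -
          have c0: "(1+1/t)/4 \<ge> 0" "1 + t \<ge> 0" using t by auto
          have "ennreal ((1+t) * (tu x - \<theta>0)^2 + ((1 + 1/t)/4) * S x)
             = ennreal ((1+t) * (tu x - \<theta>0)^2) + ennreal (((1 + 1/t)/4) * S x)"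
            using c0 S0 by (intro ennreal_plus) auto
          also have "\<dots> = ennreal (1+t) * ennreal ((tu x - \<theta>0)^2) + ennreal ((1+1/t)/4) * ennreal (S x)"
            using c0 S0 by (simp only: ennreal_mult zero_le_power2)
          finally show ?thesis .
        qed
        finally show ?case .
      qed
    qed
    also have "\<dots> = ennreal (1+t) * ennreal A + ennreal ((1+1/t)/4) * N"
    proof -
      have "(\<integral>\<^sup>+ x. ennreal (1+t) * ennreal ((tu x - \<theta>0)^2) + ennreal ((1+1/t)/4) * ennreal (S x) \<partial>M)
        = (\<integral>\<^sup>+ x. ennreal (1+t) * ennreal ((tu x - \<theta>0)^2) \<partial>M) + (\<integral>\<^sup>+ x. ennreal ((1+1/t)/4) * ennreal (S x) \<partial>M)"
        unfolding S_def by (rule nn_integral_add) measurable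
      also have "(\<integral>\<^sup>+ x. ennreal (1+t) * ennreal ((tu x - \<theta>0)^2) \<partial>M) = ennreal (1+t) * ennreal A"
        unfolding Aeq[symmetric] by (rule nn_integral_cmult) measurable
      also have "(\<integral>\<^sup>+ x. ennreal ((1+1/t)/4) * ennreal (S x) \<partial>M) = ennreal ((1+1/t)/4) * N"
        unfolding N_def S_def by (rule nn_integral_cmult) measurable
      finally show ?thesis .
    qed
    also have "\<dots> = ennreal ((1+t)*A + ((1+1/t)/4) * n)"
    proof -
      have c0: "(1+1/t)/4 \<ge> 0" "1 + t \<ge> 0" using t by auto
      have "ennreal ((1+t)*A + ((1+1/t)/4) * n) = ennreal ((1+t)*A) + ennreal (((1+1/t)/4) * n)"
        using c0 A0 n0 by (intro ennreal_plus) auto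
      also have "\<dots> = ennreal (1+t) * ennreal A + ennreal ((1+1/t)/4) * N"
        using c0 A0 n0 Neq by (simp only: ennreal_mult less_imp_le)
      finally show ?thesis by simp
    qed
    finally show ?thesis .
  qed
  have goal: "L \<le> ennreal ((sqrt A + sqrt n / 2)^2)"
  proof (cases "n = 0")
    case True
    have "L \<le> ennreal A"
    proof (rule ennreal_le_epsilon)
      fix e :: real assume e: "0 < e"
      have "L \<le> ennreal ((1 + e/A)*A + ((1+1/(e/A))/4) * n)" using bound[of "e/A"] e A0 by simp
      also have "\<dots> = ennreal A + ennreal e" using True A0 e by (simp add: algebra_simps ennreal_plus)
      finally show "L \<le> ennreal A + ennreal e" .
    qed
    thus ?thesis using True A0 by simp
  next
    case False
    hence npos: "n > 0" using n0 by simp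
    define t where "t = sqrt n / (2 * sqrt A)"
    have tpos: "t > 0" unfolding t_def using npos A0 by simp
    have "(1+t)*A + ((1+1/t)/4) * n = (sqrt A + sqrt n / 2)^2"
    proof -
      have sA: "sqrt A * sqrt A = A" using A0 by simp
      have sn: "sqrt n * sqrt n = n" using n0 by simp
      have pa: "sqrt A > 0" and pb: "sqrt n > 0" using A0 npos by auto
      have e1: "(1+t)*A = A + sqrt A * sqrt n / 2"
      proof -
        have "t*A = sqrt n / (2 * sqrt A) * (sqrt A * sqrt A)" unfolding t_def sA ..
        also have "\<dots> = sqrt A * sqrt n / 2" using pa by (simp add: field_simps)
        finally show ?thesis by (simp add: distrib_right)
      qed
      have e2: "((1+1/t)/4) * n = n/4 + sqrt A * sqrt n / 2"
      proof -
        have "(1/t) * n = (2 * sqrt A / sqrt n) * (sqrt n * sqrt n)" unfolding t_def sn by simp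
        also have "\<dots> = 2 * sqrt A * sqrt n" using pb by (simp add: field_simps)
        finally have "(1/t) * n = 2 * sqrt A * sqrt n" .
        thus ?thesis by (simp add: field_simps)
      qed
      have e3: "(sqrt A + sqrt n / 2)^2 = A + sqrt A * sqrt n + n/4"
        using A0 n0 by (simp add: power2_sum power_divide)
      show ?thesis using e1 e2 e3 by linarith
    qed
    thus ?thesis using bound[OF tpos] by simp
  qed
  show "L \<le> ennreal ((sqrt (variance tu) + sqrt (enn2real (\<integral>\<^sup>+ x. ennreal ((su2 x - sbu x)^2 / (su2 x + sb2 x - 2 * sbu x)) \<partial>M)) / 2)^2)"
    using goal unfolding A_def n_def N_def S_def .
qed

end
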